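(* Let $\Gamma=S(\Lambda,V)$ and let $\sigma\in Z^2(\Gamma,U(1))$ be a 2-cocycle. Then $\sigma$ is cohomologous to a real cocycle, that is, to an element of $Z^2(\Gamma,U(1))$ of the form $\exp(2\pi i\zeta)$ with $\zeta\in Z^2(\Gamma,\mathbb{R})$.
   Context: Let $\mathbb{K}$ be a real quadratic field with real embeddings $\iota_1,\iota_2$. Let $L\subset\mathbb{K}$ be a lattice (free $\mathbb{Z}$-module of rank 2 spanning $\mathbb{K}$), and $V=\epsilon^{\mathbb{Z}}$ the group of totally positive units $u$ with $uL\subset L$, or a finite index subgroup, with $\epsilon=\iota_1(\epsilon)>1$, $\iota_2(\epsilon)=\epsilon^{-1}$. Let $\Lambda=\{(\iota_1(\ell),\iota_2(\ell)):\ell\in L\}\subset\mathbb{R}^2$, $A_\epsilon=\mathrm{diag}(\epsilon,\epsilon^{-1})$, and $S(\Lambda,V)=\Lambda\rtimes\mathbb{Z}$ with product $(\lambda,k)(\eta,r)=(\lambda+A_\epsilon^k\eta,k+r)$. Group cohomology with coefficients in $U(1)$, $\mathbb{R}$, $\mathbb{Z}$ is with trivial action. *)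

theory Defs
  imports Complex_Main
begin

text \<open>The real quadratic field K = Q(sqrt d) (d > 1 an integer that is not a perfect square);
  an element a + b sqrt d is represented by the pair (a, b) of rationals.\<close>

type_synonym qf = "rat \<times> rat"

definition kmult :: "int \<Rightarrow> qf \<Rightarrow> qf \<Rightarrow> qf" where
  "kmult d x y = (fst x * fst y + of_int d * snd x * snd y, fst x * snd y + snd x * fst y)"

definition iota1 :: "int \<Rightarrow> qf \<Rightarrow> real" where
  "iota1 d x = real_of_rat (fst x) + real_of_rat (snd x) * sqrt (real_of_int d)"

definition iota2 :: "int \<Rightarrow> qf \<Rightarrow> real" where
  "iota2 d x = real_of_rat (fst x) - real_of_rat (snd x) * sqrt (real_of_int d)"

definition qlattice :: "qf \<Rightarrow> qf \<Rightarrow> qf set" where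
  "qlattice w1 w2 = {(of_int m * fst w1 + of_int n * fst w2, of_int m * snd w1 + of_int n * snd w2)
                     | m n :: int. True}"

definition Lam :: "int \<Rightarrow> qf \<Rightarrow> qf \<Rightarrow> (real \<times> real) set" where
  "Lam d w1 w2 = (\<lambda>l. (iota1 d l, iota2 d l)) ` qlattice w1 w2"

definition Aeps :: "real \<Rightarrow> int \<Rightarrow> real \<times> real \<Rightarrow> real \<times> real" where
  "Aeps e k p = (e powi k * fst p, e powi (-k) * snd p)"

text \<open>The group S(Lambda, V) = Lambda \<rtimes> Z: carrier and product.\<close>
definition Scar :: "(real \<times> real) set \<Rightarrow> ((real \<times> real) \<times> int) set" where
  "Scar Lm = {(p, k). p \<in> Lm}"

definition Smul :: "real \<Rightarrow> (real \<times> real) \<times> int \<Rightarrow> (real \<times> real) \<times> int \<Rightarrow> (real \<times> real) \<times> int" where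
  "Smul e g h = ((fst (fst g) + fst (Aeps e (snd g) (fst h)),
                 snd (fst g) + snd (Aeps e (snd g) (fst h))), snd g + snd h)"

definition U1_cocycle :: "'g set \<Rightarrow> ('g \<Rightarrow> 'g \<Rightarrow> 'g) \<Rightarrow> ('g \<Rightarrow> 'g \<Rightarrow> complex) \<Rightarrow> bool" where
  "U1_cocycle G mul \<sigma> \<longleftrightarrow>
     (\<forall>g\<in>G. \<forall>h\<in>G. cmod (\<sigma> g h) = 1) \<and>
     (\<forall>g\<in>G. \<forall>h\<in>G. \<forall>k\<in>G. \<sigma> h k * \<sigma> g (mul h k) = \<sigma> (mul g h) k * \<sigma> g h)"

definition real_cocycle :: "'g set \<Rightarrow> ('g \<Rightarrow> 'g \<Rightarrow> 'g) \<Rightarrow> ('g \<Rightarrow> 'g \<Rightarrow> real) \<Rightarrow> bool" where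
  "real_cocycle G mul \<zeta> \<longleftrightarrow>
     (\<forall>g\<in>G. \<forall>h\<in>G. \<forall>k\<in>G. \<zeta> h k - \<zeta> (mul g h) k + \<zeta> g (mul h k) - \<zeta> g h = 0)"

definition U1_cohomologous :: "'g set \<Rightarrow> ('g \<Rightarrow> 'g \<Rightarrow> 'g) \<Rightarrow> ('g \<Rightarrow> 'g \<Rightarrow> complex) \<Rightarrow> ('g \<Rightarrow> 'g \<Rightarrow> complex) \<Rightarrow> bool" where
  "U1_cohomologous G mul \<sigma> \<tau> \<longleftrightarrow>
     (\<exists>\<beta>. (\<forall>g\<in>G. cmod (\<beta> g) = 1) \<and>
          (\<forall>g\<in>G. \<forall>h\<in>G. \<sigma> g h = \<tau> g h * (\<beta> g * \<beta> h / \<beta> (mul g h))))"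

end

theory Submission
  imports Defs "HOL-Algebra.Group"
begin


lemma (in group) intertwine_pow_nat:
  assumes "u \<in> carrier G" "x \<in> carrier G" "y \<in> carrier G" "u \<otimes> x = y \<otimes> u"
  shows "u \<otimes> x [^] (n::nat) = y [^] n \<otimes> u"
proof (induction n)
  case 0 then show ?case using assms by simp
next
  case (Suc n)
  have "u \<otimes> x [^] Suc n = (u \<otimes> x [^] n) \<otimes> x" using assms by (simp add: m_assoc)
  also have "\<dots> = y [^] n \<otimes> (u \<otimes> x)" using Suc assms by (simp add: m_assoc)
  also have "\<dots> = y [^] Suc n \<otimes> u" using assms by (simp add: m_assoc)
  finally show ?case .
qed

lemma (in group) intertwine_pow:
  assumes "u \<in> carrier G" "x \<in> carrier G" "y \<in> carrier G" "u \<otimes> x = y \<otimes> u"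
  shows "u \<otimes> x [^] (i::int) = y [^] i \<otimes> u"
proof (cases "i \<ge> 0")
  case True
  define n where "n = nat i"
  then have "i = int n" using True by simp
  then show ?thesis using intertwine_pow_nat[OF assms] by (simp add: int_pow_int)
next
  case False
  define n where "n = nat (-i)"
  then have i: "i = - int n" using False by simp
  have h: "u \<otimes> x [^] n = y [^] n \<otimes> u" using intertwine_pow_nat[OF assms] .
  have "u = inv (y [^] n) \<otimes> u \<otimes> x [^] n"
    using h assms apply (simp add: m_assoc inv_solve_left')
    by (simp add: m_assoc[symmetric])
  then have "u \<otimes> inv (x [^] n) = inv (y [^] n) \<otimes> u"
    using assms by (simp add: inv_solve_right')
  then show ?thesis using i assms by (simp add: int_pow_neg_int)
qed

lemma (in group) commute_pow:
  assumes "x \<in> carrier G" "y \<in> carrier G" "x \<otimes> y = y \<otimes> x"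
  shows "x [^] (i::int) \<otimes> y [^] (j::int) = y [^] j \<otimes> x [^] i"
proof -
  have "y \<otimes> x [^] i = x [^] i \<otimes> y" using intertwine_pow[of y x x i] assms by simp
  then have "x [^] i \<otimes> y [^] j = y [^] j \<otimes> x [^] i"
    using intertwine_pow[of "x [^] i" y y j] assms by simp
  then show ?thesis .
qed

lemma (in group) pow_char:
  assumes "x \<in> carrier G" "\<And>i. f i \<in> carrier G" "f 0 = \<one>" "\<And>i. f (i+1) = f i \<otimes> x"
  shows "f i = x [^] (i::int)"
proof (induction i rule: int_induct[where k=0])
  case base then show ?case using assms by simp
next
  case (step1 i)
  then show ?case using assms by (simp add: int_pow_mult)
next
  case (step2 i)
  have "f (i - 1) \<otimes> x = f i" using assms(4)[of "i-1"] by simp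
  then have "f (i - 1) = f i \<otimes> inv x" using assms by (metis inv_solve_right)
  then show ?case using step2 assms by (simp add: int_pow_diff)
qed



lemma pwm: "(e::real) \<noteq> 0 \<Longrightarrow> e powi (- k - r) = e powi (-k) * e powi (-r)"
  by (metis diff_conv_add_uminus power_int_add)

lemma pwp: "(e::real) \<noteq> 0 \<Longrightarrow> e powi (k + r) = e powi k * e powi r"
  by (simp add: power_int_add)

lemma Aeps_comp: "(e::real) \<noteq> 0 \<Longrightarrow> Aeps e k (Aeps e r p) = Aeps e (k + r) p"
  by (simp add: Aeps_def pwm pwp algebra_simps)

lemma Aeps_0[simp]: "Aeps e 0 p = p" by (simp add: Aeps_def)

locale SL =
  fixes e x1 y1 x2 y2 :: real and m11 m12 m21 m22 :: int
  assumes e_gt: "e > 1"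
  and D_nz: "x1*y2 - x2*y1 \<noteq> 0"
  and M1a: "e*x1 = m11*x1 + m21*x2" and M1b: "inverse e * y1 = m11*y1 + m21*y2"
  and M2a: "e*x2 = m12*x1 + m22*x2" and M2b: "inverse e * y2 = m12*y1 + m22*y2"
begin

definition lat :: "int \<Rightarrow> int \<Rightarrow> real \<times> real" where
  "lat a b = (of_int a*x1 + of_int b*x2, of_int a*y1 + of_int b*y2)"
definition Lm where "Lm = {lat a b | a b. True}"
definition G where "G = Scar Lm"
definition e0 :: "(real \<times> real) \<times> int" where "e0 = ((0,0),0)"

lemma e_nz: "e \<noteq> 0" using e_gt by simp

lemma trace: "e + inverse e = of_int (m11 + m22)"
proof -
  have x: "x1 \<noteq> 0 \<or> x2 \<noteq> 0" using D_nz by auto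
  have y: "y1 \<noteq> 0 \<or> y2 \<noteq> 0" using D_nz by auto
  have p1: "((m11-e)*(m22-e) - real_of_int m12*real_of_int m21) * x1 = 0" using M1a M2a by algebra
  have p2: "((m11-e)*(m22-e) - real_of_int m12*real_of_int m21) * x2 = 0" using M1a M2a by algebra
  have P1: "(m11-e)*(m22-e) - m12*m21 = 0" using x p1 p2 by auto
  have q1: "((m11-inverse e)*(m22-inverse e) - real_of_int m12*real_of_int m21) * y1 = 0" using M1b M2b by algebra
  have q2: "((m11-inverse e)*(m22-inverse e) - real_of_int m12*real_of_int m21) * y2 = 0" using M1b M2b by algebra
  have P2: "(m11-inverse e)*(m22-inverse e) - m12*m21 = 0" using y q1 q2 by auto
  have "(e - inverse e) * (e + inverse e - (real_of_int m11 + real_of_int m22)) = 0" using P1 P2 by algebra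
  moreover have "e - inverse e \<noteq> 0" using e_gt
    by (metis eq_iff_diff_eq_0 inverse_inverse_eq inverse_less_1_iff less_irrefl not_one_less_zero order_less_trans zero_less_one)
  ultimately show ?thesis by simp
qed


lemma det1: "real_of_int m11 * real_of_int m22 - real_of_int m12 * real_of_int m21 = 1"
proof -
  have x: "x1 \<noteq> 0 \<or> x2 \<noteq> 0" using D_nz by auto
  have p1: "((m11-e)*(m22-e) - real_of_int m12*real_of_int m21) * x1 = 0" using M1a M2a by algebra
  have p2: "((m11-e)*(m22-e) - real_of_int m12*real_of_int m21) * x2 = 0" using M1a M2a by algebra
  have P1: "(m11-e)*(m22-e) - real_of_int m12*real_of_int m21 = 0" using x p1 p2 by auto
  have t: "e * (real_of_int m11 + real_of_int m22) = e*e + 1" using trace e_nz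
    by (metis distrib_left mult.commute of_int_add right_inverse)
  show ?thesis using P1 t by algebra
qed

lemma tr_gt2: "real_of_int (m11 + m22) > 2"
proof -
  have "(e - 1)^2 > 0" using e_gt by simp
  then have "e*e + 1 > 2*e" by (simp add: power2_eq_square algebra_simps)
  then have "(e*e+1)/e > 2" using e_gt by (simp add: field_simps)
  moreover have "(e*e+1)/e = e + inverse e" using e_nz by (simp add: field_simps)
  ultimately show ?thesis using trace by simp
qed

lemma lat_add: "(fst (lat a b) + fst (lat c f), snd (lat a b) + snd (lat c f)) = lat (a+c) (b+f)"
  by (simp add: lat_def algebra_simps)

lemma lat_uniq: "lat a b = lat c f \<Longrightarrow> a = c \<and> b = f"
proof -
  assume h: "lat a b = lat c f"
  have h1: "(of_int (a-c))*x1 + of_int (b-f)*x2 = 0" and h2: "(of_int (a-c))*y1 + of_int (b-f)*y2 = 0"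
    using h by (auto simp: lat_def algebra_simps)
  have "of_int (a-c) * (x1*y2 - x2*y1) = 0" using h1 h2 by algebra
  moreover have "of_int (b-f) * (x1*y2 - x2*y1) = 0" using h1 h2 by algebra
  ultimately show ?thesis using D_nz by auto
qed

lemma A1_lat: "Aeps e 1 (lat a b) = lat (a*m11 + b*m12) (a*m21 + b*m22)"
proof -
  have "e * (a*x1 + b*x2) = a*(e*x1) + b*(e*x2)" by (simp add: algebra_simps)
  moreover have "inverse e * (a*y1 + b*y2) = a*(inverse e*y1) + b*(inverse e*y2)" by (simp add: algebra_simps)
  ultimately show ?thesis unfolding M1a M1b M2a M2b by (simp add: Aeps_def lat_def algebra_simps)
qed

lemma Am1_lat: "Aeps e (-1) (lat a b) = lat ((m11+m22)*a - (a*m11 + b*m12)) ((m11+m22)*b - (a*m21 + b*m22))"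
proof -
  have t: "inverse e = of_int (m11+m22) - e" "e = of_int (m11+m22) - inverse e" using trace by auto
  have "Aeps e (-1) (lat a b) = (inverse e * fst (lat a b), e * snd (lat a b))"
    by (simp add: Aeps_def power_int_minus)
  also have "\<dots> = (of_int (m11+m22) * fst (lat a b) - fst (Aeps e 1 (lat a b)),
                   of_int (m11+m22) * snd (lat a b) - snd (Aeps e 1 (lat a b)))"
    apply (subst t(1)) apply (subst (2) t(2)) by (simp add: Aeps_def algebra_simps)
  also have "\<dots> = lat ((m11+m22)*a - (a*m11 + b*m12)) ((m11+m22)*b - (a*m21 + b*m22))"
    unfolding A1_lat by (simp add: lat_def algebra_simps)
  finally show ?thesis .
qed

lemma Aeps_Lm: "p \<in> Lm \<Longrightarrow> Aeps e k p \<in> Lm"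
proof (induction k rule: int_induct[where k=0])
  case base then show ?case by simp
next
  case (step1 i)
  then obtain a b where "Aeps e i p = lat a b" using Lm_def by auto
  then have "Aeps e (i+1) p = Aeps e 1 (lat a b)" using Aeps_comp[OF e_nz, of 1 i p] by (simp add: add.commute)
  then show ?case unfolding A1_lat Lm_def by auto
next
  case (step2 i)
  then obtain a b where "Aeps e i p = lat a b" using Lm_def by auto
  then have "Aeps e (i-1) p = Aeps e (-1) (lat a b)" using Aeps_comp[OF e_nz, of "-1" i p] by simp
  then show ?case unfolding Am1_lat Lm_def by auto
qed

lemma Lm_add: "p \<in> Lm \<Longrightarrow> q \<in> Lm \<Longrightarrow> (fst p + fst q, snd p + snd q) \<in> Lm"
  unfolding Lm_def using lat_add by fastforce

lemma Lm_neg: "p \<in> Lm \<Longrightarrow> (- fst p, - snd p) \<in> Lm"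
proof -
  assume "p \<in> Lm"
  then obtain a b where "p = lat a b" unfolding Lm_def by auto
  moreover have "(- fst (lat a b), - snd (lat a b)) = lat (-a) (-b)" by (simp add: lat_def)
  ultimately show ?thesis unfolding Lm_def by auto
qed

lemma Lm_0: "(0,0) \<in> Lm"
  unfolding Lm_def by (rule CollectI, rule exI[of _ 0], rule exI[of _ 0]) (simp add: lat_def)

definition GG where "GG = \<lparr>carrier = G, mult = Smul e, one = e0\<rparr>"

lemma Smul_assoc: "Smul e (Smul e g h) k = Smul e g (Smul e h k)"
  by (simp add: Smul_def Aeps_def pwp pwm e_nz algebra_simps)

lemma Smul_closed: "g \<in> G \<Longrightarrow> h \<in> G \<Longrightarrow> Smul e g h \<in> G"
  unfolding G_def Scar_def Smul_def apply clarify
  using Lm_add Aeps_Lm by (metis (mono_tags, lifting) case_prod_conv fst_conv mem_Collect_eq snd_conv)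

lemma e0_G: "e0 \<in> G" unfolding G_def Scar_def e0_def using Lm_0 by simp

lemma Smul_e0[simp]: "Smul e e0 g = g" "Smul e g e0 = g"
  by (auto simp: Smul_def e0_def Aeps_def)

definition ginv :: "(real \<times> real) \<times> int \<Rightarrow> (real \<times> real) \<times> int" where
  "ginv g = (Aeps e (- snd g) (- fst (fst g), - snd (fst g)), - snd g)"

lemma ginv_G: "g \<in> G \<Longrightarrow> ginv g \<in> G"
  unfolding G_def Scar_def ginv_def using Lm_neg Aeps_Lm by auto

lemma ginv_l: "Smul e (ginv g) g = e0"
  by (simp add: Smul_def ginv_def Aeps_def power_int_add e_nz e0_def power_int_minus field_simps)

lemma GG_group: "group GG"
proof (rule groupI)
  fix x assume "x \<in> carrier GG"
  then show "\<exists>y\<in>carrier GG. y \<otimes>\<^bsub>GG\<^esub> x = \<one>\<^bsub>GG\<^esub>"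
    by (intro bexI[of _ "ginv x"]) (simp_all add: GG_def ginv_G ginv_l)
qed (auto simp: GG_def Smul_closed e0_G Smul_assoc)

end


definition E :: "real \<Rightarrow> complex" where "E t = exp (2 * complex_of_real pi * \<i> * complex_of_real t)"

lemma E_add: "E (s + t) = E s * E t"
  by (simp add: E_def distrib_left exp_add[symmetric] algebra_simps)

lemma E_norm[simp]: "cmod (E t) = 1"
  unfolding E_def by (simp add: norm_exp_eq_Re)

lemma E_0[simp]: "E 0 = 1" by (simp add: E_def)

lemma E_Arg: "cmod z = 1 \<Longrightarrow> E (Arg z / (2*pi)) = z"
proof -
  assume z: "cmod z = 1"
  have "E (Arg z / (2*pi)) = exp (\<i> * complex_of_real (Arg z))"
    unfolding E_def by (simp add: algebra_simps)
  also have "\<dots> = cis (Arg z)" by (simp add: cis_conv_exp)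
  also have "\<dots> = z" using z by (metis mult_1 rcis_cmod_Arg rcis_def complex_of_real_def one_complex.code)
  finally show ?thesis .
qed

locale SLT = SL +
  fixes \<tau> :: "(real \<times> real) \<times> int \<Rightarrow> (real \<times> real) \<times> int \<Rightarrow> complex"
  assumes tau: "U1_cocycle G (Smul e) \<tau>" and tau_e0: "\<tau> e0 e0 = 1"
  and tau_sym: "\<tau> (lat 1 0, 0) (lat 0 1, 0) = \<tau> (lat 0 1, 0) (lat 1 0, 0)"
begin

lemma tau_norm: "g \<in> G \<Longrightarrow> h \<in> G \<Longrightarrow> cmod (\<tau> g h) = 1"
  using tau unfolding U1_cocycle_def by auto

lemma tau_nz: "g \<in> G \<Longrightarrow> h \<in> G \<Longrightarrow> \<tau> g h \<noteq> 0"
  using tau_norm by fastforce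

lemma tau_cocy: "g \<in> G \<Longrightarrow> h \<in> G \<Longrightarrow> k \<in> G \<Longrightarrow>
   \<tau> h k * \<tau> g (Smul e h k) = \<tau> (Smul e g h) k * \<tau> g h"
  using tau unfolding U1_cocycle_def by auto

lemma tau_e0l[simp]: "g \<in> G \<Longrightarrow> \<tau> e0 g = 1"
proof -
  assume g: "g \<in> G"
  have "\<tau> e0 g * \<tau> e0 g = \<tau> e0 g * \<tau> e0 e0" using tau_cocy[OF e0_G e0_G g] by simp
  then show ?thesis using tau_nz[OF e0_G g] tau_e0 by simp
qed

lemma tau_e0r[simp]: "g \<in> G \<Longrightarrow> \<tau> g e0 = 1"
proof -
  assume g: "g \<in> G"
  have "\<tau> e0 e0 * \<tau> g e0 = \<tau> g e0 * \<tau> g e0" using tau_cocy[OF g e0_G e0_G] by simp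
  then show ?thesis using tau_nz[OF g e0_G] tau_e0 by simp
qed

definition EE where "EE = \<lparr>carrier = {X. cmod (fst X) = 1 \<and> snd X \<in> G},
   mult = (\<lambda>X Y. (fst X * fst Y * \<tau> (snd X) (snd Y), Smul e (snd X) (snd Y))), one = (1, e0)\<rparr>"

lemma EE_carrier: "X \<in> carrier EE \<longleftrightarrow> cmod (fst X) = 1 \<and> snd X \<in> G" by (simp add: EE_def)
lemma EE_mult: "X \<otimes>\<^bsub>EE\<^esub> Y = (fst X * fst Y * \<tau> (snd X) (snd Y), Smul e (snd X) (snd Y))" by (simp add: EE_def)
lemma EE_one: "\<one>\<^bsub>EE\<^esub> = (1, e0)" by (simp add: EE_def)

lemma EE_group: "group EE"
proof (rule groupI)
  fix X Y assume "X \<in> carrier EE" "Y \<in> carrier EE"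
  then show "X \<otimes>\<^bsub>EE\<^esub> Y \<in> carrier EE"
    by (simp add: EE_carrier EE_mult norm_mult tau_norm Smul_closed)
next
  show "\<one>\<^bsub>EE\<^esub> \<in> carrier EE" by (simp add: EE_carrier EE_one e0_G)
next
  fix X Y Z assume X: "X \<in> carrier EE" and Y: "Y \<in> carrier EE" and Z: "Z \<in> carrier EE"
  have "\<tau> (snd Y) (snd Z) * \<tau> (snd X) (Smul e (snd Y) (snd Z)) = \<tau> (Smul e (snd X) (snd Y)) (snd Z) * \<tau> (snd X) (snd Y)"
    using X Y Z by (intro tau_cocy) (auto simp: EE_carrier)
  then show "X \<otimes>\<^bsub>EE\<^esub> Y \<otimes>\<^bsub>EE\<^esub> Z = X \<otimes>\<^bsub>EE\<^esub> (Y \<otimes>\<^bsub>EE\<^esub> Z)"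
    by (simp add: EE_mult Smul_assoc)
next
  fix X assume "X \<in> carrier EE"
  then show "\<one>\<^bsub>EE\<^esub> \<otimes>\<^bsub>EE\<^esub> X = X" by (simp add: EE_carrier EE_mult EE_one)
next
  fix X assume X: "X \<in> carrier EE"
  define Y where "Y = (inverse (fst X * \<tau> (ginv (snd X)) (snd X)), ginv (snd X))"
  have g: "snd X \<in> G" "ginv (snd X) \<in> G" using X ginv_G by (auto simp: EE_carrier)
  have nz: "fst X \<noteq> 0" using X by (auto simp: EE_carrier)
  have "Y \<in> carrier EE" using g X tau_norm[OF g(2) g(1)] by (simp add: Y_def EE_carrier norm_mult norm_inverse)
  moreover have "Y \<otimes>\<^bsub>EE\<^esub> X = \<one>\<^bsub>EE\<^esub>"
    using nz tau_nz[OF g(2) g(1)] by (simp add: Y_def EE_mult EE_one ginv_l field_simps)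
  ultimately show "\<exists>Y\<in>carrier EE. Y \<otimes>\<^bsub>EE\<^esub> X = \<one>\<^bsub>EE\<^esub>" by blast
qed

end

sublocale SLT \<subseteq> EG: group EE by (rule EE_group)
sublocale SL \<subseteq> GA: group GG by (rule GG_group)

context SLT begin

lemma snd_hom: "snd \<in> hom EE GG"
  by (rule homI) (auto simp: EE_carrier EE_mult GG_def)

lemma snd_pow: "X \<in> carrier EE \<Longrightarrow> snd (X [^]\<^bsub>EE\<^esub> (i::int)) = snd X [^]\<^bsub>GG\<^esub> i"
  using hom_int_pow[OF snd_hom _ EE_group GG_group] by simp

definition rho :: "real \<Rightarrow> complex \<times> ((real \<times> real) \<times> int)" where "rho t = (E t, e0)"

lemma rho_car[simp]: "rho t \<in> carrier EE" by (simp add: rho_def EE_carrier e0_G)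

lemma rho_l: "X \<in> carrier EE \<Longrightarrow> rho t \<otimes>\<^bsub>EE\<^esub> X = (E t * fst X, snd X)"
  by (simp add: rho_def EE_mult EE_carrier)
lemma rho_r: "X \<in> carrier EE \<Longrightarrow> X \<otimes>\<^bsub>EE\<^esub> rho t = (E t * fst X, snd X)"
  by (simp add: rho_def EE_mult EE_carrier)
lemma rho_comm: "X \<in> carrier EE \<Longrightarrow> rho t \<otimes>\<^bsub>EE\<^esub> X = X \<otimes>\<^bsub>EE\<^esub> rho t"
  by (simp add: rho_l rho_r)
lemma rho_add: "rho s \<otimes>\<^bsub>EE\<^esub> rho t = rho (s + t)"
  unfolding rho_l[OF rho_car] by (simp add: rho_def E_add mult.commute)
lemma rho_pow: "rho t [^]\<^bsub>EE\<^esub> (i::int) = rho (of_int i * t)"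
proof (rule EG.pow_char[symmetric])
  show "rho (of_int 0 * t) = \<one>\<^bsub>EE\<^esub>" by (simp add: rho_def EE_one)
  fix i :: int show "rho (of_int (i + 1) * t) = rho (of_int i * t) \<otimes>\<^bsub>EE\<^esub> rho t"
    by (simp add: rho_add algebra_simps)
qed simp_all

lemma same_snd: "X \<in> carrier EE \<Longrightarrow> Y \<in> carrier EE \<Longrightarrow> snd X = snd Y \<Longrightarrow> \<exists>k. X = rho k \<otimes>\<^bsub>EE\<^esub> Y"
proof -
  assume X: "X \<in> carrier EE" and Y: "Y \<in> carrier EE" and s: "snd X = snd Y"
  define z where "z = fst X / fst Y"
  have "cmod z = 1" using X Y by (simp add: z_def EE_carrier norm_divide)
  then have "E (Arg z / (2*pi)) = z" by (rule E_Arg)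
  moreover have "fst Y \<noteq> 0" using Y by (auto simp: EE_carrier)
  ultimately have "X = rho (Arg z / (2*pi)) \<otimes>\<^bsub>EE\<^esub> Y" using s Y
    by (simp add: rho_l z_def prod_eq_iff)
  then show ?thesis by blast
qed

end


context SL begin
lemma lat_G[simp]: "(lat a b, k) \<in> G" unfolding G_def Scar_def Lm_def by auto
lemma zero_G[simp]: "((0,0), k) \<in> G" unfolding G_def Scar_def using Lm_0 by auto
lemma lat10: "lat 1 0 = (x1, y1)" and lat01: "lat 0 1 = (x2,y2)" by (simp_all add: lat_def)

lemma GG_pow_lat: "(lat c f, 0) [^]\<^bsub>GG\<^esub> (i::int) = (lat (i*c) (i*f), 0)"
proof (rule GA.pow_char[symmetric])
  show "(lat c f, 0) \<in> carrier GG" by (simp add: GG_def)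
  show "\<And>i. (lat (i * c) (i * f), 0) \<in> carrier GG" by (simp add: GG_def)
  show "(lat (0 * c) (0 * f), 0) = \<one>\<^bsub>GG\<^esub>" by (simp add: GG_def e0_def lat_def)
  fix i :: int
  show "(lat ((i + 1) * c) ((i + 1) * f), 0) = (lat (i * c) (i * f), 0) \<otimes>\<^bsub>GG\<^esub> (lat c f, 0)"
    by (simp add: GG_def Smul_def lat_def algebra_simps)
qed

lemma GG_pow_U: "((0,0), 1) [^]\<^bsub>GG\<^esub> (i::int) = ((0,0), i)"
proof (rule GA.pow_char[symmetric])
  show "((0,0), 1) \<in> carrier GG" by (simp add: GG_def)
  show "\<And>i. ((0,0), i) \<in> carrier GG" by (simp add: GG_def)
  show "((0,0), 0) = \<one>\<^bsub>GG\<^esub>" by (simp add: GG_def e0_def)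
  fix i :: int
  show "((0,0), i+1) = ((0,0), i) \<otimes>\<^bsub>GG\<^esub> ((0,0), 1)"
    by (simp add: GG_def Smul_def Aeps_def)
qed
end

context SLT begin

definition X1 :: "complex \<times> (real \<times> real) \<times> int" where "X1 = (1, (lat 1 0, 0))"
definition X2 :: "complex \<times> (real \<times> real) \<times> int" where "X2 = (1, (lat 0 1, 0))"
definition U :: "complex \<times> (real \<times> real) \<times> int" where "U = (1, ((0,0), 1))"

lemma X_car[simp]: "X1 \<in> carrier EE" "X2 \<in> carrier EE" "U \<in> carrier EE"
  by (simp_all add: X1_def X2_def U_def EE_carrier)

definition phi0 where "phi0 a b = X1 [^]\<^bsub>EE\<^esub> (a::int) \<otimes>\<^bsub>EE\<^esub> X2 [^]\<^bsub>EE\<^esub> (b::int)"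

lemma phi0_car[simp]: "phi0 a b \<in> carrier EE" by (simp add: phi0_def)

lemma snd_mult: "snd (P \<otimes>\<^bsub>EE\<^esub> Q) = Smul e (snd P) (snd Q)" by (simp add: EE_mult)

lemma snd_phi0: "snd (phi0 a b) = (lat a b, 0)"
proof -
  have "snd (X1 [^]\<^bsub>EE\<^esub> a) = (lat a 0, 0)" using snd_pow[OF X_car(1), of a] GG_pow_lat[of 1 0 a] by (simp add: X1_def)
  moreover have "snd (X2 [^]\<^bsub>EE\<^esub> b) = (lat 0 b, 0)" using snd_pow[OF X_car(2), of b] GG_pow_lat[of 0 1 b] by (simp add: X2_def)
  ultimately show ?thesis by (simp add: phi0_def snd_mult Smul_def lat_def)
qed

lemma snd_UX1: "snd (U \<otimes>\<^bsub>EE\<^esub> X1) = (lat m11 m21, 1)"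
  using A1_lat[of 1 0] by (simp add: snd_mult U_def X1_def Smul_def)
lemma snd_UX2: "snd (U \<otimes>\<^bsub>EE\<^esub> X2) = (lat m12 m22, 1)"
  using A1_lat[of 0 1] by (simp add: snd_mult U_def X2_def Smul_def)
lemma snd_phi0U: "snd (phi0 a b \<otimes>\<^bsub>EE\<^esub> U) = (lat a b, 1)"
  by (simp add: snd_mult snd_phi0 U_def Smul_def Aeps_def)

definition k1 where "k1 = (SOME k. U \<otimes>\<^bsub>EE\<^esub> X1 = rho k \<otimes>\<^bsub>EE\<^esub> (phi0 m11 m21 \<otimes>\<^bsub>EE\<^esub> U))"
definition k2 where "k2 = (SOME k. U \<otimes>\<^bsub>EE\<^esub> X2 = rho k \<otimes>\<^bsub>EE\<^esub> (phi0 m12 m22 \<otimes>\<^bsub>EE\<^esub> U))"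

lemma k1: "U \<otimes>\<^bsub>EE\<^esub> X1 = rho k1 \<otimes>\<^bsub>EE\<^esub> (phi0 m11 m21 \<otimes>\<^bsub>EE\<^esub> U)"
  unfolding k1_def by (rule someI_ex, rule same_snd) (simp_all add: snd_UX1 snd_phi0U)
lemma k2: "U \<otimes>\<^bsub>EE\<^esub> X2 = rho k2 \<otimes>\<^bsub>EE\<^esub> (phi0 m12 m22 \<otimes>\<^bsub>EE\<^esub> U)"
  unfolding k2_def by (rule someI_ex, rule same_snd) (simp_all add: snd_UX2 snd_phi0U)

definition Dl :: real where "Dl = (real_of_int m11 - 1) * (real_of_int m22 - 1) - real_of_int m12 * real_of_int m21"
lemma Dl_nz: "Dl \<noteq> 0"
proof -
  have "Dl = 2 - real_of_int (m11 + m22)" using det1 by (simp add: Dl_def algebra_simps)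
  then show ?thesis using tr_gt2 by simp
qed

definition l1 where "l1 = (k1 * (real_of_int m22 - 1) - real_of_int m21 * k2) / Dl"
definition l2 where "l2 = ((real_of_int m11 - 1) * k2 - real_of_int m12 * k1) / Dl"

lemma Dl1: "Dl * l1 = k1 * (real_of_int m22 - 1) - real_of_int m21 * k2" using Dl_nz by (simp add: l1_def)
lemma Dl2: "Dl * l2 = (real_of_int m11 - 1) * k2 - real_of_int m12 * k1" using Dl_nz by (simp add: l2_def)

lemma l_eq1: "l1 + k1 = m11 * l1 + m21 * l2"
proof -
  have "Dl * (l1 + k1 - m11 * l1 - m21 * l2) = 0" using Dl1 Dl2 unfolding Dl_def by algebra
  then show ?thesis using Dl_nz by simp
qed
lemma l_eq2: "l2 + k2 = m12 * l1 + m22 * l2"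
proof -
  have "Dl * (l2 + k2 - m12 * l1 - m22 * l2) = 0" using Dl1 Dl2 unfolding Dl_def by algebra
  then show ?thesis using Dl_nz by simp
qed

end


context SLT begin

definition Y1 where "Y1 = rho l1 \<otimes>\<^bsub>EE\<^esub> X1"
definition Y2 where "Y2 = rho l2 \<otimes>\<^bsub>EE\<^esub> X2"
lemma Y_car[simp]: "Y1 \<in> carrier EE" "Y2 \<in> carrier EE" by (simp_all add: Y1_def Y2_def)

lemma Y1_eq: "Y1 = (E l1, (lat 1 0, 0))" unfolding Y1_def rho_l[OF X_car(1)] by (simp add: X1_def)
lemma Y2_eq: "Y2 = (E l2, (lat 0 1, 0))" unfolding Y2_def rho_l[OF X_car(2)] by (simp add: X2_def)

lemma Y_comm: "Y1 \<otimes>\<^bsub>EE\<^esub> Y2 = Y2 \<otimes>\<^bsub>EE\<^esub> Y1"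
  unfolding Y1_eq Y2_eq EE_mult using tau_sym by (simp add: Smul_def lat_def mult.commute)

definition phi where "phi a b = Y1 [^]\<^bsub>EE\<^esub> (a::int) \<otimes>\<^bsub>EE\<^esub> Y2 [^]\<^bsub>EE\<^esub> (b::int)"
lemma phi_car[simp]: "phi a b \<in> carrier EE" by (simp add: phi_def)

lemma phi_mult: "phi a b \<otimes>\<^bsub>EE\<^esub> phi c f = phi (a+c) (b+f)"
proof -
  have c: "Y2 [^]\<^bsub>EE\<^esub> b \<otimes>\<^bsub>EE\<^esub> Y1 [^]\<^bsub>EE\<^esub> c = Y1 [^]\<^bsub>EE\<^esub> c \<otimes>\<^bsub>EE\<^esub> Y2 [^]\<^bsub>EE\<^esub> b"
    using EG.commute_pow[OF Y_car(2) Y_car(1)] Y_comm by simp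
  have "phi a b \<otimes>\<^bsub>EE\<^esub> phi c f = Y1 [^]\<^bsub>EE\<^esub> a \<otimes>\<^bsub>EE\<^esub> (Y2 [^]\<^bsub>EE\<^esub> b \<otimes>\<^bsub>EE\<^esub> Y1 [^]\<^bsub>EE\<^esub> c) \<otimes>\<^bsub>EE\<^esub> Y2 [^]\<^bsub>EE\<^esub> f"
    by (simp add: phi_def EG.m_assoc)
  also have "\<dots> = (Y1 [^]\<^bsub>EE\<^esub> a \<otimes>\<^bsub>EE\<^esub> Y1 [^]\<^bsub>EE\<^esub> c) \<otimes>\<^bsub>EE\<^esub> (Y2 [^]\<^bsub>EE\<^esub> b \<otimes>\<^bsub>EE\<^esub> Y2 [^]\<^bsub>EE\<^esub> f)"
    unfolding c by (simp add: EG.m_assoc)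
  also have "\<dots> = phi (a+c) (b+f)" by (simp add: phi_def EG.int_pow_mult)
  finally show ?thesis .
qed

lemma phi_pow: "phi c f [^]\<^bsub>EE\<^esub> (a::int) = phi (a*c) (a*f)"
proof -
  have c: "Y1 [^]\<^bsub>EE\<^esub> c \<otimes>\<^bsub>EE\<^esub> Y2 [^]\<^bsub>EE\<^esub> f = Y2 [^]\<^bsub>EE\<^esub> f \<otimes>\<^bsub>EE\<^esub> Y1 [^]\<^bsub>EE\<^esub> c"
    using EG.commute_pow[OF Y_car(1) Y_car(2)] Y_comm by simp
  show ?thesis unfolding phi_def EG.int_pow_mult_distrib[OF c EG.int_pow_closed EG.int_pow_closed, OF Y_car]
    by (simp add: EG.int_pow_pow mult.commute)
qed

lemma rho_pow_dist: "(rho l \<otimes>\<^bsub>EE\<^esub> X) [^]\<^bsub>EE\<^esub> (a::int) = rho (of_int a * l) \<otimes>\<^bsub>EE\<^esub> X [^]\<^bsub>EE\<^esub> a"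
  if "X \<in> carrier EE" for X
  using EG.int_pow_mult_distrib[OF rho_comm[OF that] rho_car that] by (simp add: rho_pow)

lemma phi_phi0: "phi a b = rho (of_int a * l1 + of_int b * l2) \<otimes>\<^bsub>EE\<^esub> phi0 a b"
proof -
  have "phi a b = rho (of_int a * l1) \<otimes>\<^bsub>EE\<^esub> X1 [^]\<^bsub>EE\<^esub> a \<otimes>\<^bsub>EE\<^esub> (rho (of_int b * l2) \<otimes>\<^bsub>EE\<^esub> X2 [^]\<^bsub>EE\<^esub> b)"
    unfolding phi_def Y1_def Y2_def by (simp add: rho_pow_dist)
  also have "\<dots> = rho (of_int a * l1) \<otimes>\<^bsub>EE\<^esub> (X1 [^]\<^bsub>EE\<^esub> a \<otimes>\<^bsub>EE\<^esub> rho (of_int b * l2)) \<otimes>\<^bsub>EE\<^esub> X2 [^]\<^bsub>EE\<^esub> b"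
    by (simp add: EG.m_assoc)
  also have "\<dots> = rho (of_int a * l1) \<otimes>\<^bsub>EE\<^esub> rho (of_int b * l2) \<otimes>\<^bsub>EE\<^esub> (X1 [^]\<^bsub>EE\<^esub> a \<otimes>\<^bsub>EE\<^esub> X2 [^]\<^bsub>EE\<^esub> b)"
  proof -
    have "X1 [^]\<^bsub>EE\<^esub> a \<otimes>\<^bsub>EE\<^esub> rho (of_int b * l2) = rho (of_int b * l2) \<otimes>\<^bsub>EE\<^esub> X1 [^]\<^bsub>EE\<^esub> a"
      by (rule rho_comm[symmetric]) simp
    then show ?thesis by (simp add: EG.m_assoc)
  qed
  finally show ?thesis by (simp add: rho_add phi0_def)
qed

lemma U_rho: "U \<otimes>\<^bsub>EE\<^esub> rho t = rho t \<otimes>\<^bsub>EE\<^esub> U" by (simp add: rho_comm)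

lemma key1: "U \<otimes>\<^bsub>EE\<^esub> Y1 = phi m11 m21 \<otimes>\<^bsub>EE\<^esub> U"
proof -
  have "U \<otimes>\<^bsub>EE\<^esub> Y1 = rho l1 \<otimes>\<^bsub>EE\<^esub> (U \<otimes>\<^bsub>EE\<^esub> X1)"
    unfolding Y1_def by (simp add: EG.m_assoc[symmetric] U_rho)
  also have "\<dots> = rho (l1 + k1) \<otimes>\<^bsub>EE\<^esub> phi0 m11 m21 \<otimes>\<^bsub>EE\<^esub> U"
    unfolding k1 by (simp add: EG.m_assoc[symmetric] rho_add)
  also have "\<dots> = phi m11 m21 \<otimes>\<^bsub>EE\<^esub> U" unfolding phi_phi0 l_eq1 by simp
  finally show ?thesis .
qed

lemma key2: "U \<otimes>\<^bsub>EE\<^esub> Y2 = phi m12 m22 \<otimes>\<^bsub>EE\<^esub> U"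
proof -
  have "U \<otimes>\<^bsub>EE\<^esub> Y2 = rho l2 \<otimes>\<^bsub>EE\<^esub> (U \<otimes>\<^bsub>EE\<^esub> X2)"
    unfolding Y2_def by (simp add: EG.m_assoc[symmetric] U_rho)
  also have "\<dots> = rho (l2 + k2) \<otimes>\<^bsub>EE\<^esub> phi0 m12 m22 \<otimes>\<^bsub>EE\<^esub> U"
    unfolding k2 by (simp add: EG.m_assoc[symmetric] rho_add)
  also have "\<dots> = phi m12 m22 \<otimes>\<^bsub>EE\<^esub> U" unfolding phi_phi0 l_eq2 by simp
  finally show ?thesis .
qed

lemma conj_phi: "U \<otimes>\<^bsub>EE\<^esub> phi a b = phi (a*m11 + b*m12) (a*m21 + b*m22) \<otimes>\<^bsub>EE\<^esub> U"
proof -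
  have h1: "U \<otimes>\<^bsub>EE\<^esub> Y1 [^]\<^bsub>EE\<^esub> a = phi (a*m11) (a*m21) \<otimes>\<^bsub>EE\<^esub> U"
    using EG.intertwine_pow[OF X_car(3) Y_car(1) phi_car key1, of a] by (simp add: phi_pow)
  have h2: "U \<otimes>\<^bsub>EE\<^esub> Y2 [^]\<^bsub>EE\<^esub> b = phi (b*m12) (b*m22) \<otimes>\<^bsub>EE\<^esub> U"
    using EG.intertwine_pow[OF X_car(3) Y_car(2) phi_car key2, of b] by (simp add: phi_pow)
  have "U \<otimes>\<^bsub>EE\<^esub> phi a b = (U \<otimes>\<^bsub>EE\<^esub> Y1 [^]\<^bsub>EE\<^esub> a) \<otimes>\<^bsub>EE\<^esub> Y2 [^]\<^bsub>EE\<^esub> b"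
    by (simp add: phi_def EG.m_assoc)
  also have "\<dots> = phi (a*m11) (a*m21) \<otimes>\<^bsub>EE\<^esub> (U \<otimes>\<^bsub>EE\<^esub> Y2 [^]\<^bsub>EE\<^esub> b)"
    unfolding h1 by (simp add: EG.m_assoc)
  also have "\<dots> = phi (a*m11) (a*m21) \<otimes>\<^bsub>EE\<^esub> phi (b*m12) (b*m22) \<otimes>\<^bsub>EE\<^esub> U"
    unfolding h2 by (simp add: EG.m_assoc)
  finally show ?thesis by (simp add: phi_mult)
qed

lemma snd_phi: "snd (phi a b) = (lat a b, 0)"
  unfolding phi_phi0 by (simp add: rho_l snd_phi0)

end


context SL begin
definition co :: "real \<times> real \<Rightarrow> int \<times> int" where
  "co p = (SOME ab. p = lat (fst ab) (snd ab))"
lemma co_lat[simp]: "co (lat a b) = (a, b)"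
proof -
  have "lat a b = lat (fst (co (lat a b))) (snd (co (lat a b)))"
    unfolding co_def by (rule someI_ex) auto
  then show ?thesis using lat_uniq by (metis prod.collapse)
qed
end

context SLT begin

definition Phi where "Phi p = phi (fst (co p)) (snd (co p))"
lemma Phi_lat[simp]: "Phi (lat a b) = phi a b" by (simp add: Phi_def)
lemma Phi_car[simp]: "Phi p \<in> carrier EE" by (simp add: Phi_def)

lemma Lm_E: "p \<in> Lm \<Longrightarrow> \<exists>a b. p = lat a b" unfolding Lm_def by auto

lemma Phi_law: "p \<in> Lm \<Longrightarrow> U \<otimes>\<^bsub>EE\<^esub> Phi p = Phi (Aeps e 1 p) \<otimes>\<^bsub>EE\<^esub> U"
  using Lm_E conj_phi A1_lat by fastforce

lemma Phi_law_k: "\<forall>p\<in>Lm. U [^]\<^bsub>EE\<^esub> (k::int) \<otimes>\<^bsub>EE\<^esub> Phi p = Phi (Aeps e k p) \<otimes>\<^bsub>EE\<^esub> U [^]\<^bsub>EE\<^esub> k"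
proof (induction k rule: int_induct[where k=0])
  case base then show ?case by simp
next
  case (step1 i)
  show ?case
  proof
    fix p assume p: "p \<in> Lm"
    have "U [^]\<^bsub>EE\<^esub> (i+1) \<otimes>\<^bsub>EE\<^esub> Phi p = U [^]\<^bsub>EE\<^esub> i \<otimes>\<^bsub>EE\<^esub> (U \<otimes>\<^bsub>EE\<^esub> Phi p)"
      by (simp add: EG.int_pow_mult EG.m_assoc)
    also have "\<dots> = (U [^]\<^bsub>EE\<^esub> i \<otimes>\<^bsub>EE\<^esub> Phi (Aeps e 1 p)) \<otimes>\<^bsub>EE\<^esub> U"
      by (simp add: Phi_law[OF p] EG.m_assoc)
    also have "\<dots> = Phi (Aeps e i (Aeps e 1 p)) \<otimes>\<^bsub>EE\<^esub> (U [^]\<^bsub>EE\<^esub> i \<otimes>\<^bsub>EE\<^esub> U)"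
      using step1.IH Aeps_Lm[OF p] by (simp add: EG.m_assoc)
    also have "\<dots> = Phi (Aeps e (i+1) p) \<otimes>\<^bsub>EE\<^esub> U [^]\<^bsub>EE\<^esub> (i+1)"
      by (simp add: EG.int_pow_mult Aeps_comp[OF e_nz])
    finally show "U [^]\<^bsub>EE\<^esub> (i+1) \<otimes>\<^bsub>EE\<^esub> Phi p = Phi (Aeps e (i+1) p) \<otimes>\<^bsub>EE\<^esub> U [^]\<^bsub>EE\<^esub> (i+1)" .
  qed
next
  case (step2 i)
  show ?case
  proof
    fix p assume p: "p \<in> Lm"
    define q where "q = Aeps e (-1) p"
    have q: "q \<in> Lm" using Aeps_Lm[OF p] q_def by simp
    have qp: "Aeps e 1 q = p" unfolding q_def Aeps_comp[OF e_nz] by simp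
    have l: "U \<otimes>\<^bsub>EE\<^esub> Phi q = Phi p \<otimes>\<^bsub>EE\<^esub> U" using Phi_law[OF q] qp by simp
    have inv: "inv\<^bsub>EE\<^esub> U \<otimes>\<^bsub>EE\<^esub> Phi p = Phi q \<otimes>\<^bsub>EE\<^esub> inv\<^bsub>EE\<^esub> U"
    proof -
      have "inv\<^bsub>EE\<^esub> U \<otimes>\<^bsub>EE\<^esub> Phi p = inv\<^bsub>EE\<^esub> U \<otimes>\<^bsub>EE\<^esub> (Phi p \<otimes>\<^bsub>EE\<^esub> U) \<otimes>\<^bsub>EE\<^esub> inv\<^bsub>EE\<^esub> U"
        by (simp add: EG.m_assoc)
      also have "\<dots> = Phi q \<otimes>\<^bsub>EE\<^esub> inv\<^bsub>EE\<^esub> U"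
        unfolding l[symmetric] by (simp add: EG.m_assoc[symmetric])
      finally show ?thesis .
    qed
    have "U [^]\<^bsub>EE\<^esub> (i-1) \<otimes>\<^bsub>EE\<^esub> Phi p = U [^]\<^bsub>EE\<^esub> i \<otimes>\<^bsub>EE\<^esub> (inv\<^bsub>EE\<^esub> U \<otimes>\<^bsub>EE\<^esub> Phi p)"
      by (simp add: EG.int_pow_diff EG.m_assoc)
    also have "\<dots> = (U [^]\<^bsub>EE\<^esub> i \<otimes>\<^bsub>EE\<^esub> Phi q) \<otimes>\<^bsub>EE\<^esub> inv\<^bsub>EE\<^esub> U"
      by (simp add: inv EG.m_assoc)
    also have "\<dots> = Phi (Aeps e i q) \<otimes>\<^bsub>EE\<^esub> (U [^]\<^bsub>EE\<^esub> i \<otimes>\<^bsub>EE\<^esub> inv\<^bsub>EE\<^esub> U)"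
      using step2.IH q by (simp add: EG.m_assoc)
    also have "\<dots> = Phi (Aeps e (i-1) p) \<otimes>\<^bsub>EE\<^esub> U [^]\<^bsub>EE\<^esub> (i-1)"
      by (simp add: EG.int_pow_diff q_def Aeps_comp[OF e_nz])
    finally show "U [^]\<^bsub>EE\<^esub> (i-1) \<otimes>\<^bsub>EE\<^esub> Phi p = Phi (Aeps e (i-1) p) \<otimes>\<^bsub>EE\<^esub> U [^]\<^bsub>EE\<^esub> (i-1)" .
  qed
qed

lemma Phi_add: "p \<in> Lm \<Longrightarrow> q \<in> Lm \<Longrightarrow> Phi p \<otimes>\<^bsub>EE\<^esub> Phi q = Phi (fst p + fst q, snd p + snd q)"
proof -
  assume "p \<in> Lm" "q \<in> Lm"
  then obtain a b c f where "p = lat a b" "q = lat c f" using Lm_E by blast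
  then show ?thesis using lat_add[of a b c f] phi_mult[of a b c f] by simp
qed

lemma snd_Phi: "p \<in> Lm \<Longrightarrow> snd (Phi p) = (p, 0)"
  using Lm_E snd_phi by fastforce

lemma snd_Upow: "snd (U [^]\<^bsub>EE\<^esub> (k::int)) = ((0,0), k)"
  using snd_pow[OF X_car(3), of k] GG_pow_U[of k] by (simp add: U_def)

definition s where "s (g :: (real \<times> real) \<times> int) = Phi (fst g) \<otimes>\<^bsub>EE\<^esub> U [^]\<^bsub>EE\<^esub> (snd g)"

lemma s_car: "s g \<in> carrier EE" by (simp add: s_def)

lemma G_Lm: "g \<in> G \<Longrightarrow> fst g \<in> Lm" unfolding G_def Scar_def by auto

lemma snd_s: "g \<in> G \<Longrightarrow> snd (s g) = g"
  by (simp add: s_def snd_mult snd_Phi G_Lm snd_Upow Smul_def Aeps_def)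

lemma s_mult: "g \<in> G \<Longrightarrow> h \<in> G \<Longrightarrow> s g \<otimes>\<^bsub>EE\<^esub> s h = s (Smul e g h)"
proof -
  assume g: "g \<in> G" and h: "h \<in> G"
  have ph: "Aeps e (snd g) (fst h) \<in> Lm" using Aeps_Lm G_Lm h by blast
  have "s g \<otimes>\<^bsub>EE\<^esub> s h = Phi (fst g) \<otimes>\<^bsub>EE\<^esub> (U [^]\<^bsub>EE\<^esub> (snd g) \<otimes>\<^bsub>EE\<^esub> Phi (fst h)) \<otimes>\<^bsub>EE\<^esub> U [^]\<^bsub>EE\<^esub> (snd h)"
    by (simp add: s_def EG.m_assoc)
  also have "\<dots> = (Phi (fst g) \<otimes>\<^bsub>EE\<^esub> Phi (Aeps e (snd g) (fst h))) \<otimes>\<^bsub>EE\<^esub> (U [^]\<^bsub>EE\<^esub> (snd g) \<otimes>\<^bsub>EE\<^esub> U [^]\<^bsub>EE\<^esub> (snd h))"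
    using Phi_law_k G_Lm[OF h] by (simp add: EG.m_assoc)
  also have "\<dots> = s (Smul e g h)"
    unfolding Phi_add[OF G_Lm[OF g] ph] by (simp add: s_def Smul_def EG.int_pow_mult)
  finally show ?thesis .
qed

theorem tau_cobound: "\<exists>\<beta>. (\<forall>g\<in>G. cmod (\<beta> g) = 1) \<and> (\<forall>g\<in>G. \<forall>h\<in>G. \<tau> g h = \<beta> (Smul e g h) / (\<beta> g * \<beta> h))"
proof (intro exI conjI ballI)
  fix g assume "g \<in> G" show "cmod (fst (s g)) = 1" using s_car by (simp add: EE_carrier)
next
  fix g h assume g: "g \<in> G" and h: "h \<in> G"
  have "fst (s g \<otimes>\<^bsub>EE\<^esub> s h) = fst (s (Smul e g h))" using s_mult[OF g h] by simp
  then have "fst (s g) * fst (s h) * \<tau> g h = fst (s (Smul e g h))"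
    by (simp add: EE_mult snd_s g h)
  moreover have "fst (s g) \<noteq> 0" "fst (s h) \<noteq> 0" using s_car[of g] s_car[of h] by (auto simp: EE_carrier)
  ultimately show "\<tau> g h = fst (s (Smul e g h)) / (fst (s g) * fst (s h))"
    by (simp add: field_simps)
qed

end


definition om :: "real \<times> real \<Rightarrow> real \<times> real \<Rightarrow> real" where
  "om p q = fst p * snd q - snd p * fst q"

lemma zeta_key:
  assumes "(e::real) \<noteq> 0"
  shows "om (fst h) (Aeps e (snd h) (fst k)) - om (fst (Smul e g h)) (Aeps e (snd (Smul e g h)) (fst k))
     + om (fst g) (Aeps e (snd g) (fst (Smul e h k))) - om (fst g) (Aeps e (snd g) (fst h)) = 0"
proof -
  obtain p1 p2 a where g: "g = ((p1,p2), a)" by (metis prod.collapse)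
  obtain q1 q2 b where h: "h = ((q1,q2), b)" by (metis prod.collapse)
  obtain r1 r2 f where k: "k = ((r1,r2), f)" by (metis prod.collapse)
  define P where "P = e powi a"
  define P' where "P' = e powi (-a)"
  define Q where "Q = e powi b"
  define Q' where "Q' = e powi (-b)"
  have 1: "P * P' = 1" using assms by (simp add: P_def P'_def power_int_minus field_simps)
  have 2: "e powi (a+b) = P * Q" "e powi (-a-b) = P' * Q'"
    using assms by (simp_all add: pwp pwm P_def P'_def Q_def Q'_def)
  have "om (fst h) (Aeps e (snd h) (fst k)) - om (fst (Smul e g h)) (Aeps e (snd (Smul e g h)) (fst k))
     + om (fst g) (Aeps e (snd g) (fst (Smul e h k))) - om (fst g) (Aeps e (snd g) (fst h))
     = (q1*Q'*r2 - q2*Q*r1) - ((p1 + P*q1)*(P'*Q'*r2) - (p2 + P'*q2)*(P*Q*r1))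
       + (p1*(P'*(q2 + Q'*r2)) - p2*(P*(q1 + Q*r1))) - (p1*(P'*q2) - p2*(P*q1))"
    unfolding g h k by (simp add: om_def Smul_def Aeps_def 2 P_def[symmetric] P'_def[symmetric] Q_def[symmetric] Q'_def[symmetric])
  also have "\<dots> = (1 - P*P') * (q1*Q'*r2 - q2*Q*r1)" by (simp add: algebra_simps)
  also have "\<dots> = 0" using 1 by simp
  finally show ?thesis .
qed

lemma zeta_cocycle:
  assumes "(e::real) \<noteq> 0"
  shows "real_cocycle S (Smul e) (\<lambda>g h. c * om (fst g) (Aeps e (snd g) (fst h)))"
  unfolding real_cocycle_def
proof (intro ballI)
  fix g h k
  have "c * (om (fst h) (Aeps e (snd h) (fst k)) - om (fst (Smul e g h)) (Aeps e (snd (Smul e g h)) (fst k))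
     + om (fst g) (Aeps e (snd g) (fst (Smul e h k))) - om (fst g) (Aeps e (snd g) (fst h))) = 0"
    using zeta_key[OF assms] by simp
  then show "c * om (fst h) (Aeps e (snd h) (fst k)) - c * om (fst (Smul e g h)) (Aeps e (snd (Smul e g h)) (fst k))
     + c * om (fst g) (Aeps e (snd g) (fst (Smul e h k))) - c * om (fst g) (Aeps e (snd g) (fst h)) = 0"
    by (simp only: ring_distribs)
qed

lemma sqrt_sq: "(d::int) > 0 \<Longrightarrow> sqrt (real_of_int d) * sqrt (real_of_int d) = real_of_int d"
  by simp

lemma iota_mult:
  assumes d: "d > 0"
  shows "iota1 d (kmult d x y) = iota1 d x * iota1 d y" "iota2 d (kmult d x y) = iota2 d x * iota2 d y"
proof -
  define s where "s = sqrt (real_of_int d)"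
  have s: "s * s = real_of_int d" using d by (simp add: s_def)
  define A where "A = real_of_rat (fst x)"
  define B where "B = real_of_rat (snd x)"
  define C where "C = real_of_rat (fst y)"
  define F where "F = real_of_rat (snd y)"
  have "iota1 d (kmult d x y) = A*C + real_of_int d*B*F + (A*F + B*C)*s"
    by (simp add: iota1_def kmult_def of_rat_add of_rat_mult A_def B_def C_def F_def s_def)
  also have "\<dots> = (A + B*s) * (C + F*s)" unfolding s[symmetric] by (simp add: algebra_simps)
  finally show "iota1 d (kmult d x y) = iota1 d x * iota1 d y"
    by (simp add: iota1_def A_def B_def C_def F_def s_def)
  have "iota2 d (kmult d x y) = A*C + real_of_int d*B*F - (A*F + B*C)*s"
    by (simp add: iota2_def kmult_def of_rat_add of_rat_mult A_def B_def C_def F_def s_def)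
  also have "\<dots> = (A - B*s) * (C - F*s)" unfolding s[symmetric] by (simp add: algebra_simps)
  finally show "iota2 d (kmult d x y) = iota2 d x * iota2 d y"
    by (simp add: iota2_def A_def B_def C_def F_def s_def)
qed

lemma iota_lin:
  "iota1 d (of_int m * fst w1 + of_int n * fst w2, of_int m * snd w1 + of_int n * snd w2) = of_int m * iota1 d w1 + of_int n * iota1 d w2"
  "iota2 d (of_int m * fst w1 + of_int n * fst w2, of_int m * snd w1 + of_int n * snd w2) = of_int m * iota2 d w1 + of_int n * iota2 d w2"
  by (simp_all add: iota1_def iota2_def of_rat_add of_rat_mult algebra_simps)

lemma D_formula: "d > 0 \<Longrightarrow> iota1 d w1 * iota2 d w2 - iota1 d w2 * iota2 d w1
   = - 2 * sqrt (real_of_int d) * real_of_rat (fst w1 * snd w2 - snd w1 * fst w2)"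
  by (simp add: iota1_def iota2_def of_rat_add of_rat_mult of_rat_diff algebra_simps)



theorem lemma5p3:
  fixes d :: int and w1 w2 \<epsilon> :: qf and \<sigma> :: "(real \<times> real) \<times> int \<Rightarrow> (real \<times> real) \<times> int \<Rightarrow> complex"
  assumes d_gt: "d > 1"
    and d_nonsq: "\<forall>n::int. n * n \<noteq> d"
    and w_indep: "fst w1 * snd w2 - snd w1 * fst w2 \<noteq> 0"
    and eps_gt: "iota1 d \<epsilon> > 1"
    and eps_conj: "iota2 d \<epsilon> = inverse (iota1 d \<epsilon>)"
    and eps_L: "\<forall>l\<in>qlattice w1 w2. kmult d \<epsilon> l \<in> qlattice w1 w2"
    and sigma: "U1_cocycle (Scar (Lam d w1 w2)) (Smul (iota1 d \<epsilon>)) \<sigma>"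
  shows "\<exists>\<zeta>. real_cocycle (Scar (Lam d w1 w2)) (Smul (iota1 d \<epsilon>)) \<zeta> \<and>
             U1_cohomologous (Scar (Lam d w1 w2)) (Smul (iota1 d \<epsilon>)) \<sigma>
               (\<lambda>g h. exp (2 * complex_of_real pi * \<i> * complex_of_real (\<zeta> g h)))"
proof -
  define e where "e = iota1 d \<epsilon>"
  define x1 where "x1 = iota1 d w1"
  define y1 where "y1 = iota2 d w1"
  define x2 where "x2 = iota1 d w2"
  define y2 where "y2 = iota2 d w2"
  have d0: "d > 0" using d_gt by simp
  have w1L: "w1 \<in> qlattice w1 w2"
    unfolding qlattice_def by (rule CollectI, rule exI[where x=1], rule exI[where x=0]) simp
  have w2L: "w2 \<in> qlattice w1 w2"
    unfolding qlattice_def by (rule CollectI, rule exI[where x=0], rule exI[where x=1]) simp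
  obtain m11 m21 where E1: "kmult d \<epsilon> w1 = (of_int m11 * fst w1 + of_int m21 * fst w2, of_int m11 * snd w1 + of_int m21 * snd w2)"
    using eps_L w1L unfolding qlattice_def by blast
  obtain m12 m22 where E2: "kmult d \<epsilon> w2 = (of_int m12 * fst w1 + of_int m22 * fst w2, of_int m12 * snd w1 + of_int m22 * snd w2)"
    using eps_L w2L unfolding qlattice_def by blast
  have M1a: "e*x1 = m11*x1 + m21*x2"
    using iota_mult(1)[OF d0, of \<epsilon> w1] unfolding E1 iota_lin e_def x1_def x2_def by simp
  have M1b: "inverse e*y1 = m11*y1 + m21*y2"
    using iota_mult(2)[OF d0, of \<epsilon> w1] unfolding E1 iota_lin e_def y1_def y2_def eps_conj by simp
  have M2a: "e*x2 = m12*x1 + m22*x2"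
    using iota_mult(1)[OF d0, of \<epsilon> w2] unfolding E2 iota_lin e_def x1_def x2_def by simp
  have M2b: "inverse e*y2 = m12*y1 + m22*y2"
    using iota_mult(2)[OF d0, of \<epsilon> w2] unfolding E2 iota_lin e_def y1_def y2_def eps_conj by simp
  have D_nz: "x1*y2 - x2*y1 \<noteq> 0"
    unfolding x1_def y1_def x2_def y2_def D_formula[OF d0] using w_indep d0 by simp
  have sl: "SL e x1 y1 x2 y2 m11 m12 m21 m22"
    unfolding SL_def using eps_gt M1a M1b M2a M2b D_nz by (simp add: e_def)
  interpret S: SL e x1 y1 x2 y2 m11 m12 m21 m22 by (rule sl)
  have LamEq: "Lam d w1 w2 = S.Lm"
  proof
    show "Lam d w1 w2 \<subseteq> S.Lm"
    proof
      fix p assume "p \<in> Lam d w1 w2"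
      then obtain m n where "p = (iota1 d (of_int m * fst w1 + of_int n * fst w2, of_int m * snd w1 + of_int n * snd w2),
                                   iota2 d (of_int m * fst w1 + of_int n * fst w2, of_int m * snd w1 + of_int n * snd w2))"
        unfolding Lam_def qlattice_def by blast
      then have "p = S.lat m n" unfolding S.lat_def unfolding iota_lin x1_def y1_def x2_def y2_def by simp
      then show "p \<in> S.Lm" unfolding S.Lm_def by blast
    qed
  next
    show "S.Lm \<subseteq> Lam d w1 w2"
    proof
      fix p assume "p \<in> S.Lm"
      then obtain m n where p: "p = S.lat m n" unfolding S.Lm_def by blast
      let ?l = "(of_int m * fst w1 + of_int n * fst w2, of_int m * snd w1 + of_int n * snd w2) :: qf"
      have "?l \<in> qlattice w1 w2" unfolding qlattice_def by blast
      moreover have "p = (iota1 d ?l, iota2 d ?l)" unfolding p S.lat_def unfolding iota_lin x1_def y1_def x2_def y2_def by simp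
      ultimately show "p \<in> Lam d w1 w2" unfolding Lam_def by blast
    qed
  qed
  have GEq: "Scar (Lam d w1 w2) = S.G" by (simp add: LamEq S.G_def)
  have sig: "U1_cocycle S.G (Smul e) \<sigma>" using sigma by (simp add: GEq e_def)
  have sig_norm: "g \<in> S.G \<Longrightarrow> h \<in> S.G \<Longrightarrow> cmod (\<sigma> g h) = 1" for g h using sig unfolding U1_cocycle_def by auto
  have sig_nz: "g \<in> S.G \<Longrightarrow> h \<in> S.G \<Longrightarrow> \<sigma> g h \<noteq> 0" for g h using sig_norm by fastforce
  have sig_cocy: "g \<in> S.G \<Longrightarrow> h \<in> S.G \<Longrightarrow> k \<in> S.G \<Longrightarrow>
    \<sigma> h k * \<sigma> g (Smul e h k) = \<sigma> (Smul e g h) k * \<sigma> g h" for g h k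
    using sig unfolding U1_cocycle_def by auto
  define c0 where "c0 = \<sigma> S.e0 S.e0"
  have c0: "cmod c0 = 1" "c0 \<noteq> 0" using sig_norm[OF S.e0_G S.e0_G] by (auto simp: c0_def)
  define g1 :: "(real \<times> real) \<times> int" where "g1 = (S.lat 1 0, 0)"
  define g2 :: "(real \<times> real) \<times> int" where "g2 = (S.lat 0 1, 0)"
  have g12: "g1 \<in> S.G" "g2 \<in> S.G" by (simp_all add: g1_def g2_def)
  define r where "r = \<sigma> g1 g2 / \<sigma> g2 g1"
  have r: "cmod r = 1" using sig_norm[OF g12] sig_norm[OF g12(2) g12(1)] by (simp add: r_def norm_divide)
  define D where "D = x1*y2 - x2*y1"
  define c where "c = Arg r / (4 * pi * D)"
  define \<zeta> where "\<zeta> g h = c * om (fst g) (Aeps e (snd g) (fst h))" for g h :: "(real \<times> real) \<times> int"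
  have zc: "real_cocycle S.G (Smul e) \<zeta>" unfolding \<zeta>_def by (rule zeta_cocycle[OF S.e_nz])
  have zc': "\<zeta> h k + \<zeta> g (Smul e h k) = \<zeta> (Smul e g h) k + \<zeta> g h" if "g \<in> S.G" "h \<in> S.G" "k \<in> S.G" for g h k
  proof -
    have "\<zeta> h k - \<zeta> (Smul e g h) k + \<zeta> g (Smul e h k) - \<zeta> g h = 0"
      using zc that unfolding real_cocycle_def by blast
    then show ?thesis by linarith
  qed
  define \<tau> where "\<tau> g h = \<sigma> g h / (c0 * E (\<zeta> g h))" for g h
  have Enz: "E t \<noteq> 0" for t using E_norm[of t] by fastforce
  have tau_cocy: "U1_cocycle S.G (Smul e) \<tau>"
    unfolding U1_cocycle_def
  proof (intro conjI ballI)
    fix g h assume "g \<in> S.G" "h \<in> S.G"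
    then show "cmod (\<tau> g h) = 1" by (simp add: \<tau>_def norm_divide norm_mult c0 sig_norm)
  next
    fix g h k assume g: "g \<in> S.G" and h: "h \<in> S.G" and k: "k \<in> S.G"
    have Eq: "E (\<zeta> h k) * E (\<zeta> g (Smul e h k)) = E (\<zeta> (Smul e g h) k) * E (\<zeta> g h)"
      by (simp add: E_add[symmetric] zc'[OF g h k])
    have "\<tau> h k * \<tau> g (Smul e h k) = (\<sigma> h k * \<sigma> g (Smul e h k)) / (c0 * c0 * (E (\<zeta> h k) * E (\<zeta> g (Smul e h k))))"
      by (simp add: \<tau>_def)
    also have "\<dots> = (\<sigma> (Smul e g h) k * \<sigma> g h) / (c0 * c0 * (E (\<zeta> (Smul e g h) k) * E (\<zeta> g h)))"
      by (simp add: sig_cocy[OF g h k] Eq)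
    also have "\<dots> = \<tau> (Smul e g h) k * \<tau> g h" by (simp add: \<tau>_def)
    finally show "\<tau> h k * \<tau> g (Smul e h k) = \<tau> (Smul e g h) k * \<tau> g h" .
  qed
  have tau_e0: "\<tau> S.e0 S.e0 = 1"
    using c0 by (simp add: \<tau>_def \<zeta>_def c0_def S.e0_def om_def)
  have Dnz: "D \<noteq> 0" using D_nz by (simp add: D_def)
  have z12: "\<zeta> g1 g2 = c * D" "\<zeta> g2 g1 = - (c * D)"
    by (simp_all add: \<zeta>_def g1_def g2_def om_def S.lat_def D_def algebra_simps)
  have Er: "E (c * D) * E (c * D) = r"
  proof -
    have "E (c*D) * E (c*D) = E (Arg r / (2*pi))" unfolding E_add[symmetric] c_def using Dnz
      by (simp add: field_simps)
    then show ?thesis using E_Arg[OF r] by simp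
  qed
  have Einv: "E (- t) = inverse (E t)" for t
    using E_add[of t "-t"] Enz[of t] by (simp add: field_simps)
  have tau_sym: "\<tau> (S.lat 1 0, 0) (S.lat 0 1, 0) = \<tau> (S.lat 0 1, 0) (S.lat 1 0, 0)"
  proof -
    have s12: "\<sigma> g1 g2 = r * \<sigma> g2 g1" using sig_nz[OF g12(2) g12(1)] by (simp add: r_def)
    show ?thesis unfolding g1_def[symmetric] g2_def[symmetric] \<tau>_def z12 Einv s12 Er[symmetric]
      using Enz[of "c*D"] c0 by (simp add: field_simps)
  qed
  have slt: "SLT e x1 y1 x2 y2 m11 m12 m21 m22 \<tau>"
    by (intro SLT.intro sl SLT_axioms.intro tau_cocy tau_e0 tau_sym)
  obtain \<beta>0 where b0: "\<forall>g\<in>S.G. cmod (\<beta>0 g) = 1"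
    and b0e: "\<forall>g\<in>S.G. \<forall>h\<in>S.G. \<tau> g h = \<beta>0 (Smul e g h) / (\<beta>0 g * \<beta>0 h)"
    using SLT.tau_cobound[OF slt] by blast
  define \<beta> where "\<beta> g = c0 / \<beta>0 g" for g
  have "real_cocycle S.G (Smul e) \<zeta> \<and> U1_cohomologous S.G (Smul e) \<sigma> (\<lambda>g h. E (\<zeta> g h))"
    unfolding U1_cohomologous_def
  proof (intro conjI zc exI[of _ \<beta>] ballI)
    fix g assume "g \<in> S.G" then show "cmod (\<beta> g) = 1" using b0 c0 by (simp add: \<beta>_def norm_divide)
  next
    fix g h assume g: "g \<in> S.G" and h: "h \<in> S.G"
    have gh: "Smul e g h \<in> S.G" using S.Smul_closed[OF g h] .
    have nz: "\<beta>0 g \<noteq> 0" "\<beta>0 h \<noteq> 0" "\<beta>0 (Smul e g h) \<noteq> 0" using b0 g h gh by fastforce+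
    have "\<sigma> g h = c0 * E (\<zeta> g h) * \<tau> g h" using c0 Enz by (simp add: \<tau>_def)
    also have "\<dots> = E (\<zeta> g h) * (\<beta> g * \<beta> h / \<beta> (Smul e g h))"
      using b0e g h nz c0 by (simp add: \<beta>_def field_simps)
    finally show "\<sigma> g h = E (\<zeta> g h) * (\<beta> g * \<beta> h / \<beta> (Smul e g h))" .
  qed
  then show ?thesis unfolding GEq e_def[symmetric] E_def by blast
qed


end
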